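(* An integral domain $D$ is a quasilocal API-domain if and only if for each nonempty subset $\{a_\alpha\}_{\alpha\in\Lambda}$ of $D\setminus\{0\}$ there exist a natural number $n$ and $\alpha_0\in\Lambda$ with $a_{\alpha_0}^n\mid a_\alpha^n$ for every $\alpha\in\Lambda$.
   Context: Quasilocal: having a unique maximal ideal. An integral domain $D$ is an API-domain if for every nonempty subset $\{d_\alpha\}_{\alpha\in\Lambda}$ of $D\setminus\{0\}$ there is a natural number $n$ such that the ideal generated by $\{d_\alpha^n\}_{\alpha\in\Lambda}$ is principal. *)

theory Defs
  imports "HOL-Algebra.Algebra"
begin

definition quasilocal :: "('a, 'b) ring_scheme \<Rightarrow> bool" where
  "quasilocal R \<longleftrightarrow> (\<exists>!M. maximalideal M R)"

definition API_domain :: "('a, 'b) ring_scheme \<Rightarrow> bool" where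
  "API_domain R \<longleftrightarrow> domain R \<and>
     (\<forall>S. S \<subseteq> carrier R - {\<zero>\<^bsub>R\<^esub>} \<and> S \<noteq> {} \<longrightarrow>
        (\<exists>n::nat. n \<ge> 1 \<and> principalideal (Idl\<^bsub>R\<^esub> ((\<lambda>d. d [^]\<^bsub>R\<^esub> n) ` S)) R))"

end

theory Submission
  imports Defs
begin
context domain begin

lemma exists_maximal:
  assumes I: "ideal I R" and one: "\<one> \<notin> I"
  shows "\<exists>M. maximalideal M R \<and> I \<subseteq> M"
proof -
  define Cands where "Cands = {J. ideal J R \<and> I \<subseteq> J \<and> \<one> \<notin> J}"
  have "\<exists>M\<in>Cands. \<forall>J\<in>Cands. M \<subseteq> J \<longrightarrow> J = M"
  proof (rule subset_Zorn)
    fix C assume C: "subset.chain Cands C"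
    show "\<exists>U\<in>Cands. \<forall>J\<in>C. J \<subseteq> U"
    proof (cases "C = {}")
      case True
      then show ?thesis using I one Cands_def by auto
    next
      case False
      have ch: "subset.chain {J. ideal J R} C"
        using C unfolding pred_on.chain_def Cands_def by auto
      have "ideal (\<Union>C) R" using chain_Union_is_ideal[OF ch] False by simp
      moreover have "I \<subseteq> \<Union>C"
      proof -
        obtain J0 where "J0 \<in> C" using False by auto
        then show ?thesis using C unfolding pred_on.chain_def Cands_def by auto
      qed
      moreover have "\<one> \<notin> \<Union>C" using C unfolding pred_on.chain_def Cands_def by auto
      ultimately show ?thesis unfolding Cands_def by auto
    qed
  qed
  then obtain M where M: "M \<in> Cands" "\<And>J. J \<in> Cands \<Longrightarrow> M \<subseteq> J \<Longrightarrow> J = M" by blast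
  have "maximalideal M R"
  proof (rule maximalidealI)
    show "ideal M R" using M Cands_def by auto
    show "carrier R \<noteq> M" using M Cands_def by auto
    fix J assume J: "ideal J R" "M \<subseteq> J" "J \<subseteq> carrier R"
    show "J = M \<or> J = carrier R"
    proof (cases "\<one> \<in> J")
      case True then show ?thesis using ideal.one_imp_carrier[OF J(1)] by auto
    next
      case False then have "J \<in> Cands" using J M Cands_def by auto
      then show ?thesis using M J by auto
    qed
  qed
  then show ?thesis using M Cands_def by auto
qed

lemma maximal_no_units:
  assumes "maximalideal M R" "u \<in> Units R"
  shows "u \<notin> M"
proof
  assume "u \<in> M"
  interpret maximalideal M R by fact
  have "inv u \<otimes> u \<in> M" using \<open>u \<in> M\<close> assms(2) by (intro I_l_closed) auto
  moreover have "inv u \<otimes> u = \<one>" using assms(2) by simp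
  ultimately have "\<one> \<in> M" by simp
  then show False using one_imp_carrier I_notcarr by auto
qed

lemma nonunit_in_max:
  assumes q: "\<exists>!M. maximalideal M R" and M: "maximalideal M R"
    and x: "x \<in> carrier R" "x \<notin> Units R"
  shows "x \<in> M"
proof -
  have "\<one> \<notin> PIdl x"
  proof
    assume "\<one> \<in> PIdl x"
    then obtain y where y: "y \<in> carrier R" "\<one> = y \<otimes> x" unfolding cgenideal_def by auto
    then have "x \<in> Units R" using x unfolding Units_def by (auto simp: m_comm)
    then show False using x by auto
  qed
  then obtain N where N: "maximalideal N R" "PIdl x \<subseteq> N"
    using exists_maximal[OF cgenideal_ideal[OF x(1)]] by auto
  then have "N = M" using q M by auto
  then show ?thesis using N cgenideal_self[OF x(1)] by auto
qed

lemma mult_ideal: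
  assumes M: "ideal M R" and i: "i \<in> carrier R"
  shows "ideal {y. \<exists>m\<in>M. y = m \<otimes> i} R"
proof -
  interpret ideal M R by fact
  show ?thesis
  proof (intro subgroup.intro idealI[OF ring_axioms], simp_all)
    show "{y. \<exists>m\<in>M. y = m \<otimes> i} \<subseteq> carrier R" using i by auto
    show "\<And>x y. \<exists>m\<in>M. x = m \<otimes> i \<Longrightarrow> \<exists>m\<in>M. y = m \<otimes> i \<Longrightarrow> \<exists>m\<in>M. x \<oplus> y = m \<otimes> i"
      using i by (metis a_closed l_distr Icarr)
    show "\<exists>m\<in>M. \<zero> = m \<otimes> i" using i by (metis l_null zero_closed)
    show "\<And>x. \<exists>m\<in>M. x = m \<otimes> i \<Longrightarrow> \<exists>m\<in>M. inv\<^bsub>add_monoid R\<^esub> x = m \<otimes> i"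
      using i by (metis a_inv_def a_inv_closed l_minus Icarr)
    show "\<And>b x. \<exists>m\<in>M. b = m \<otimes> i \<Longrightarrow> x \<in> carrier R \<Longrightarrow> \<exists>m\<in>M. x \<otimes> b = m \<otimes> i"
      using i by (metis I_l_closed m_assoc Icarr)
    show "\<And>b x. \<exists>m\<in>M. b = m \<otimes> i \<Longrightarrow> x \<in> carrier R \<Longrightarrow> \<exists>m\<in>M. b \<otimes> x = m \<otimes> i"
      using i by (metis I_r_closed m_assoc m_comm Icarr)
  qed
qed


lemma pow_lemma:
  assumes a: "a \<in> carrier R" and b: "b \<in> carrier R" and ab: "a \<oplus> b = \<one>"
  shows "\<exists>f\<in>carrier R. b [^] (n::nat) \<oplus> a \<otimes> f = \<one>"
proof (induction n)
  case 0
  then show ?case using a by (intro bexI[of _ \<zero>]) auto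
next
  case (Suc n)
  then obtain f where f: "f \<in> carrier R" "b [^] n \<oplus> a \<otimes> f = \<one>" by auto
  define g where "g = b [^] n \<oplus> f \<otimes> a \<oplus> f \<otimes> b"
  have gc: "g \<in> carrier R" using a b f g_def by auto
  have "b [^] Suc n \<oplus> a \<otimes> g = (b [^] n \<oplus> a \<otimes> f) \<otimes> (a \<oplus> b)"
    unfolding g_def using a b f(1) by (simp add: l_distr r_distr a_ac m_ac)
  also have "\<dots> = \<one>" using f ab by simp
  finally show ?case using gc by blast
qed

lemma pow_nonzero:
  assumes "a \<in> carrier R" "a \<noteq> \<zero>"
  shows "a [^] (n::nat) \<noteq> \<zero>"
  using assms by (induction n) (auto simp: integral_iff)

lemma core:
  assumes a: "a \<in> carrier R" "a \<notin> Units R" and b: "b \<in> carrier R"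
    and ab: "a \<oplus> b = \<one>" and n: "n \<ge> 1" and d: "(a [^] n) divides (b [^] (n::nat))"
  shows False
proof -
  obtain f where f: "f \<in> carrier R" "b [^] n \<oplus> a \<otimes> f = \<one>" using pow_lemma[OF a(1) b ab] by auto
  obtain c where c: "c \<in> carrier R" "b [^] n = a [^] n \<otimes> c" using d unfolding factor_def by auto
  obtain k where k: "n = Suc k" using n by (cases n) auto
  have "a \<otimes> (a [^] k \<otimes> c \<oplus> f) = \<one>"
    using f c a k by (simp add: nat_pow_Suc2 m_ac r_distr)
  then have "a \<otimes> (a [^] k \<otimes> c \<oplus> f) \<in> Units R" by simp
  then have "a \<in> Units R" using a c f by (intro unit_factor[of a "a [^] k \<otimes> c \<oplus> f"]) auto
  then show False using a by simp
qed


lemma forward: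
  assumes q: "\<exists>!M. maximalideal M R"
    and S: "S \<subseteq> carrier R - {\<zero>}" "S \<noteq> {}"
    and n: "principalideal (Idl ((\<lambda>d. d [^] (n::nat)) ` S)) R"
  shows "\<exists>a0\<in>S. \<forall>a\<in>S. (a0 [^] n) divides (a [^] n)"
proof -
  define P where "P = (\<lambda>d. d [^] n) ` S"
  have Pc: "P \<subseteq> carrier R" using S P_def by auto
  obtain i where i: "i \<in> carrier R" "Idl P = Idl {i}"
    using principalideal.generate[OF n] P_def by auto
  have iP: "Idl P = PIdl i" using i cgenideal_eq_genideal by simp
  obtain M where M: "maximalideal M R" using q by auto
  obtain s0 where s0: "s0 \<in> S" using S by auto
  have "s0 [^] n \<in> Idl P" using genideal_self[OF Pc] s0 P_def by auto
  moreover have "s0 [^] n \<noteq> \<zero>" using pow_nonzero s0 S by auto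
  ultimately have inz: "i \<noteq> \<zero>" using i genideal_zero by auto
  have "\<exists>s\<in>S. \<exists>u\<in>Units R. s [^] n = u \<otimes> i"
  proof (rule ccontr)
    assume H: "\<not> ?thesis"
    define J where "J = {y. \<exists>m\<in>M. y = m \<otimes> i}"
    have J: "ideal J R" unfolding J_def using mult_ideal[OF maximalideal.axioms(1)[OF M] i(1)] .
    have "P \<subseteq> J"
    proof
      fix p assume "p \<in> P"
      then obtain s where s: "s \<in> S" "p = s [^] n" using P_def by auto
      have "p \<in> PIdl i" using genideal_self[OF Pc] \<open>p \<in> P\<close> iP by auto
      then obtain t where t: "t \<in> carrier R" "p = t \<otimes> i" unfolding cgenideal_def by auto
      have "t \<notin> Units R"
      proof
        assume tu: "t \<in> Units R"
        have "s [^] n = t \<otimes> i" using s t by simp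
        then show False using H s(1) tu by blast
      qed
      then have "t \<in> M" using nonunit_in_max[OF q M t(1)] by auto
      then show "p \<in> J" using t J_def by auto
    qed
    then have "Idl P \<subseteq> J" using genideal_minimal[OF J] by auto
    then have "i \<in> J" using iP cgenideal_self[OF i(1)] by auto
    then obtain m where m: "m \<in> M" "i = m \<otimes> i" using J_def by auto
    have mc: "m \<in> carrier R" using m M ideal.Icarr maximalideal.axioms(1) by metis
    have "m \<otimes> i = \<one> \<otimes> i" using m i by simp
    then have "m = \<one>" using m_rcancel[OF inz i(1) mc one_closed] by simp
    then show False using maximal_no_units[OF M, of \<one>] m by auto
  qed
  then obtain s u where su: "s \<in> S" "u \<in> Units R" "s [^] n = u \<otimes> i" by auto
  have uc: "u \<in> carrier R" "inv u \<in> carrier R" using su by auto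
  show ?thesis
  proof (intro bexI[OF _ su(1)] ballI)
    fix a assume a: "a \<in> S"
    have "a [^] n \<in> PIdl i" using genideal_self[OF Pc] a P_def iP by auto
    then obtain t where t: "t \<in> carrier R" "a [^] n = t \<otimes> i" unfolding cgenideal_def by auto
    have eq: "s [^] n \<otimes> (inv u \<otimes> t) = (inv u \<otimes> u) \<otimes> (t \<otimes> i)"
      using su(3) uc t i by (simp add: m_ac)
    also have "\<dots> = a [^] n" using su(2) t i by simp
    finally have "s [^] n \<otimes> (inv u \<otimes> t) = a [^] n" .
    then show "(s [^] n) divides (a [^] n)" unfolding factor_def using uc t
      by (intro bexI[of _ "inv u \<otimes> t"]) auto
  qed
qed

lemma unit_times: "a \<in> carrier R \<Longrightarrow> b \<in> carrier R \<Longrightarrow> a \<otimes> b \<in> Units R \<Longrightarrow> b \<in> Units R"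
  using unit_factor[of b a] by (simp add: m_comm)

lemma sum_nonunit:
  assumes H: "\<forall>S. S \<subseteq> carrier R - {\<zero>} \<and> S \<noteq> {} \<longrightarrow>
       (\<exists>n::nat. n \<ge> 1 \<and> (\<exists>a0\<in>S. \<forall>a\<in>S. (a0 [^] n) divides (a [^] n)))"
    and a: "a \<in> carrier R" "a \<notin> Units R" and b: "b \<in> carrier R" "b \<notin> Units R"
  shows "a \<oplus> b \<notin> Units R"
proof
  assume u: "a \<oplus> b \<in> Units R"
  define v where "v = inv (a \<oplus> b)"
  have v: "v \<in> carrier R" "(a \<oplus> b) \<otimes> v = \<one>" using u v_def by auto
  define a' where "a' = a \<otimes> v"
  define b' where "b' = b \<otimes> v"
  have c: "a' \<in> carrier R" "b' \<in> carrier R" using a b v a'_def b'_def by auto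
  have s: "a' \<oplus> b' = \<one>" using v a b unfolding a'_def b'_def by (simp add: l_distr)
  have s2: "b' \<oplus> a' = \<one>" using s c by (simp add: a_comm)
  have a'u: "a' \<notin> Units R"
  proof
    assume "a' \<in> Units R"
    then have "a' \<otimes> (a \<oplus> b) \<in> Units R" using u by auto
    moreover have "a' \<otimes> (a \<oplus> b) = a" using v a b unfolding a'_def by (simp add: m_ac)
    ultimately show False using a by simp
  qed
  have b'u: "b' \<notin> Units R"
  proof
    assume "b' \<in> Units R"
    then have "b' \<otimes> (a \<oplus> b) \<in> Units R" using u by auto
    moreover have "b' \<otimes> (a \<oplus> b) = b" using v a b unfolding b'_def by (simp add: m_ac)
    ultimately show False using b by simp
  qed
  have a'0: "a' \<noteq> \<zero>" using s c b'u by auto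
  have b'0: "b' \<noteq> \<zero>" using s c a'u by auto
  have Sab: "{a', b'} \<subseteq> carrier R - {\<zero>} \<and> {a', b'} \<noteq> {}" using c a'0 b'0 by auto
  obtain n a0 where n: "n \<ge> 1" "a0 \<in> {a', b'}" "\<forall>x\<in>{a', b'}. (a0 [^] n) divides (x [^] (n::nat))"
    using mp[OF spec[OF H, of "{a', b'}"] Sab] by auto
  show False
  proof (cases "a0 = a'")
    case True
    then show False using core[OF c(1) a'u c(2) s n(1)] n(3) by auto
  next
    case False
    then have "a0 = b'" using n(2) by auto
    then show False using core[OF c(2) b'u c(1) s2 n(1)] n(3) by auto
  qed
qed

lemma backward_quasilocal:
  assumes H: "\<forall>S. S \<subseteq> carrier R - {\<zero>} \<and> S \<noteq> {} \<longrightarrow>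
       (\<exists>n::nat. n \<ge> 1 \<and> (\<exists>a0\<in>S. \<forall>a\<in>S. (a0 [^] n) divides (a [^] n)))"
  shows "\<exists>!M. maximalideal M R"
proof -
  define M where "M = carrier R - Units R"
  have zM: "\<zero> \<notin> Units R"
  proof
    assume "\<zero> \<in> Units R"
    then have "\<zero> \<otimes> inv \<zero> = \<one>" by simp
    moreover have "inv \<zero> \<in> carrier R" using \<open>\<zero> \<in> Units R\<close> by auto
    ultimately show False by simp
  qed
  have MI: "ideal M R"
  proof (rule idealI[OF ring_axioms])
    show "subgroup M (add_monoid R)"
    proof (rule subgroup.intro)
      show "M \<subseteq> carrier (add_monoid R)" using M_def by auto
    next
      fix x y assume x: "x \<in> M" and y: "y \<in> M"
      show "x \<otimes>\<^bsub>add_monoid R\<^esub> y \<in> M" using sum_nonunit[OF H] x y M_def by auto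
    next
      show "\<one>\<^bsub>add_monoid R\<^esub> \<in> M" using zM M_def by simp
    next
      fix x assume x: "x \<in> M"
      have xc: "x \<in> carrier R" using x M_def by auto
      have e1: "(\<ominus> \<one>) \<otimes> x = \<ominus> x" using xc l_minus by simp
      have e2: "\<ominus> x = inv\<^bsub>add_monoid R\<^esub> x" by (simp add: a_inv_def)
      have e: "inv\<^bsub>add_monoid R\<^esub> x = (\<ominus> \<one>) \<otimes> x" using e1 e2 by simp
      have "(\<ominus> \<one>) \<otimes> x \<notin> Units R" using x M_def unit_times[of "\<ominus> \<one>" x] by auto
      then show "inv\<^bsub>add_monoid R\<^esub> x \<in> M" using e x M_def by auto
    qed
  next
    fix a x assume a: "a \<in> M" and x: "x \<in> carrier R"
    show "x \<otimes> a \<in> M" using unit_times[of x a] a x M_def by auto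
  next
    fix a x assume a: "a \<in> M" and x: "x \<in> carrier R"
    show "a \<otimes> x \<in> M" using unit_factor[of a x] a x M_def by auto
  qed
  have MM: "maximalideal M R"
  proof (rule maximalidealI[OF MI])
    show "carrier R \<noteq> M" using M_def by auto
    fix J assume J: "ideal J R" "M \<subseteq> J" "J \<subseteq> carrier R"
    show "J = M \<or> J = carrier R"
    proof (cases "\<exists>u\<in>J. u \<in> Units R")
      case True
      then obtain u where u: "u \<in> J" "u \<in> Units R" by auto
      have "inv u \<otimes> u \<in> J" using u by (intro ideal.I_l_closed[OF J(1)]) auto
      then have "\<one> \<in> J" using u by simp
      then show ?thesis using ideal.one_imp_carrier[OF J(1)] by auto
    next
      case False
      then have "J \<subseteq> M" using J M_def by auto
      then show ?thesis using J by auto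
    qed
  qed
  show ?thesis
  proof (rule ex1I[of _ M])
    show "maximalideal M R" by (rule MM)
    fix N assume N: "maximalideal N R"
    have "N \<subseteq> M" using maximal_no_units[OF N] ideal.Icarr[OF maximalideal.axioms(1)[OF N]] M_def by auto
    then have "M = N \<or> M = carrier R"
      using maximalideal.I_maximal[OF N MI] M_def by auto
    then show "N = M" using M_def by auto
  qed
qed

lemma backward_API:
  assumes H: "\<forall>S. S \<subseteq> carrier R - {\<zero>} \<and> S \<noteq> {} \<longrightarrow>
       (\<exists>n::nat. n \<ge> 1 \<and> (\<exists>a0\<in>S. \<forall>a\<in>S. (a0 [^] n) divides (a [^] n)))"
  shows "API_domain R"
  unfolding API_domain_def
proof (intro conjI allI impI)
  show "domain R" by (rule domain_axioms)
  fix S assume S: "S \<subseteq> carrier R - {\<zero>} \<and> S \<noteq> {}"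
  obtain n a0 where n: "n \<ge> 1" "a0 \<in> S" "\<forall>a\<in>S. (a0 [^] n) divides (a [^] (n::nat))"
    using mp[OF spec[OF H, of S] S] by auto
  define P where "P = (\<lambda>d. d [^] n) ` S"
  have Pc: "P \<subseteq> carrier R" using S P_def by auto
  have a0c: "a0 [^] n \<in> carrier R" using n S by auto
  have "Idl P = Idl {a0 [^] n}"
  proof
    have "P \<subseteq> PIdl (a0 [^] n)"
    proof
      fix p assume "p \<in> P"
      then obtain a where a: "a \<in> S" "p = a [^] n" using P_def by auto
      then obtain c where "c \<in> carrier R" "a [^] n = a0 [^] n \<otimes> c" using n unfolding factor_def by blast
      then show "p \<in> PIdl (a0 [^] n)" unfolding cgenideal_def using a a0c by (auto simp: m_comm)
    qed
    then show "Idl P \<subseteq> Idl {a0 [^] n}"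
      using genideal_minimal[OF cgenideal_ideal[OF a0c]] cgenideal_eq_genideal[OF a0c] by auto
    have "a0 [^] n \<in> Idl P" using genideal_self[OF Pc] n P_def by auto
    then show "Idl {a0 [^] n} \<subseteq> Idl P"
      using genideal_minimal[OF genideal_ideal[OF Pc]] by auto
  qed
  then have "principalideal (Idl P) R"
    using principalidealI[OF genideal_ideal[OF Pc]] a0c by auto
  then show "\<exists>n::nat. 1 \<le> n \<and> principalideal (Idl ((\<lambda>d. d [^] n) ` S)) R"
    using n P_def by (intro exI[of _ n]) auto
qed

end

theorem theorem4:
  fixes R :: "('a, 'b) ring_scheme"
  assumes "domain R"
  shows "(quasilocal R \<and> API_domain R) \<longleftrightarrow>
    (\<forall>S. S \<subseteq> carrier R - {\<zero>\<^bsub>R\<^esub>} \<and> S \<noteq> {} \<longrightarrow>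
       (\<exists>n::nat. n \<ge> 1 \<and> (\<exists>a0\<in>S. \<forall>a\<in>S. (a0 [^]\<^bsub>R\<^esub> n) divides\<^bsub>R\<^esub> (a [^]\<^bsub>R\<^esub> n))))"
proof
  assume L: "quasilocal R \<and> API_domain R"
  show "\<forall>S. S \<subseteq> carrier R - {\<zero>\<^bsub>R\<^esub>} \<and> S \<noteq> {} \<longrightarrow>
       (\<exists>n::nat. n \<ge> 1 \<and> (\<exists>a0\<in>S. \<forall>a\<in>S. (a0 [^]\<^bsub>R\<^esub> n) divides\<^bsub>R\<^esub> (a [^]\<^bsub>R\<^esub> n)))"
  proof (intro allI impI)
    fix S assume S: "S \<subseteq> carrier R - {\<zero>\<^bsub>R\<^esub>} \<and> S \<noteq> {}"
    then obtain n where n: "n \<ge> 1" "principalideal (Idl\<^bsub>R\<^esub> ((\<lambda>d. d [^]\<^bsub>R\<^esub> (n::nat)) ` S)) R"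
      using L unfolding API_domain_def by blast
    have q: "\<exists>!M. maximalideal M R" using L unfolding quasilocal_def by auto
    have "\<exists>a0\<in>S. \<forall>a\<in>S. (a0 [^]\<^bsub>R\<^esub> n) divides\<^bsub>R\<^esub> (a [^]\<^bsub>R\<^esub> n)"
      using domain.forward[OF assms q _ _ n(2)] S by auto
    then show "\<exists>n::nat. n \<ge> 1 \<and> (\<exists>a0\<in>S. \<forall>a\<in>S. (a0 [^]\<^bsub>R\<^esub> n) divides\<^bsub>R\<^esub> (a [^]\<^bsub>R\<^esub> n))"
      using n(1) by blast
  qed
next
  assume H: "\<forall>S. S \<subseteq> carrier R - {\<zero>\<^bsub>R\<^esub>} \<and> S \<noteq> {} \<longrightarrow>
       (\<exists>n::nat. n \<ge> 1 \<and> (\<exists>a0\<in>S. \<forall>a\<in>S. (a0 [^]\<^bsub>R\<^esub> n) divides\<^bsub>R\<^esub> (a [^]\<^bsub>R\<^esub> n)))"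
  show "quasilocal R \<and> API_domain R"
    using domain.backward_quasilocal[OF assms H] domain.backward_API[OF assms H]
    unfolding quasilocal_def by auto
qed

end
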